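(* Let $A\in\mathbb{R}^{n\times n}$ be symmetric with eigenvalues $\alpha_1\ge\cdots\ge\alpha_n$, $g\in\mathbb{R}^n$ nonzero, $\Delta>0$, and consider the TRS of minimizing $\frac12x^TAx+x^Tg$ subject to $\|x\|\le\Delta$, in the easy case. With the notation of the context, suppose $\|x_{opt}\|=\|x_k\|=\Delta$. Then $$\sin\angle(x_{opt},x_k)\le\sqrt\kappa\sqrt{\sin^2\angle(x_{opt},\mathcal{K}_k)+\sin^4\angle(x_{opt},\mathcal{K}_k)}\le2\sqrt\kappa\Big(\frac{\sqrt\kappa-1}{\sqrt\kappa+1}\Big)^k+4\sqrt\kappa\Big(\frac{\sqrt\kappa-1}{\sqrt\kappa+1}\Big)^{2k},$$ where $\mathcal{K}_k=\mathcal{K}_k(A,g)$.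
   Context: Norms are Euclidean. $x_{opt}$ is a global minimizer of the TRS with multiplier $\lambda_{opt}\ge0$ ($(A+\lambda_{opt}I)x_{opt}=-g$, $\lambda_{opt}(\Delta-\|x_{opt}\|)=0$, $A+\lambda_{opt}I\succeq0$); easy case: $\lambda_{opt}>-\alpha_n$. $\kappa=(\alpha_1+\lambda_{opt})/(\alpha_n+\lambda_{opt})$. $\mathcal{K}_k(A,g)=\mathrm{span}\{g,Ag,\ldots,A^{k-1}g\}$ with orthonormal basis $Q_k$ from the Lanczos process ($q_1=g/\|g\|$, $T_k=Q_k^TAQ_k$ tridiagonal). GLTR iterate $x_k=Q_kh_k$ where $h_k$ minimizes $\frac12h^TT_kh+\|g\|h^Te_1$ over $\|h\|\le\Delta$. For a nonzero vector $p$ and subspace $\mathcal{W}$ with orthonormal basis $W$, $\sin\angle(p,\mathcal{W})=\|(I-WW^T)p\|/\|p\|$; for vectors, $\sin\angle(x_{opt},x_k)=\min_{\chi}\|x_{opt}/\Delta-\chi x_k\|$. *)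

theory Defs
  imports "HOL-Analysis.Analysis"
begin

definition trs_obj :: "real^'n^'n \<Rightarrow> real^'n \<Rightarrow> real^'n \<Rightarrow> real" where
  "trs_obj A g x = (1/2) * (x \<bullet> (A *v x)) + x \<bullet> g"

definition real_eigenvalues :: "real^'n^'n \<Rightarrow> real set" where
  "real_eigenvalues A = {\<mu>. \<exists>v. v \<noteq> 0 \<and> A *v v = \<mu> *\<^sub>R v}"

definition eig_max :: "real^'n^'n \<Rightarrow> real" where
  "eig_max A = Max (real_eigenvalues A)"

definition eig_min :: "real^'n^'n \<Rightarrow> real" where
  "eig_min A = Min (real_eigenvalues A)"

definition krylov :: "real^'n^'n \<Rightarrow> real^'n \<Rightarrow> nat \<Rightarrow> (real^'n) set" where
  "krylov A g k = span {((\<lambda>v. A *v v) ^^ j) g | j. j < k}"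

text \<open>sin of the angle between a nonzero vector p and a subspace W:
  norm ((I - W W^T) p) / norm p, where the columns of W form an orthonormal basis of W;
  W W^T p = sum over basis vectors b of (b . p) b.\<close>
definition sin_angle_subspace :: "'a::euclidean_space \<Rightarrow> 'a set \<Rightarrow> real" where
  "sin_angle_subspace p W =
    (let B = (SOME B. B \<subseteq> W \<and> pairwise orthogonal B \<and> (\<forall>b\<in>B. norm b = 1) \<and> span B = W)
     in norm (p - (\<Sum>b\<in>B. (b \<bullet> p) *\<^sub>R b)) / norm p)"

text \<open>GLTR iterate: x_k = Q_k h_k with h_k minimizing 1/2 h^T T_k h + ||g|| h^T e_1 over
  ||h|| <= Delta. Since Q_k is an orthonormal basis of K_k with Q_k^T g = ||g|| e_1 and
  T_k = Q_k^T A Q_k, this is exactly: x_k minimizes the TRS objective over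
  K_k(A,g) intersected with the ball of radius Delta.\<close>
definition gltr_iterate :: "real^'n^'n \<Rightarrow> real^'n \<Rightarrow> real \<Rightarrow> nat \<Rightarrow> real^'n \<Rightarrow> bool" where
  "gltr_iterate A g \<Delta> k x \<longleftrightarrow>
     x \<in> krylov A g k \<and> norm x \<le> \<Delta> \<and>
     (\<forall>y \<in> krylov A g k. norm y \<le> \<Delta> \<longrightarrow> trs_obj A g x \<le> trs_obj A g y)"

end

theory Submission
  imports Defs "HOL-Computational_Algebra.Polynomial"
begin

lemma sym_inner:
  fixes A :: "real^'n^'n"
  assumes "transpose A = A"
  shows "u \<bullet> (A *v w) = (A *v u) \<bullet> w"
  by (metis assms dot_lmul_matrix vector_transpose_matrix)

lemma quad_nonpos_imp:
  fixes N d :: real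
  assumes N: "N \<ge> 0" and h: "\<And>t. 2*t*N + t^2*d \<le> 0"
  shows "N = 0"
proof (rule ccontr)
  assume "N \<noteq> 0" then have Np: "N > 0" using N by simp
  define t where "t = N/(\<bar>d\<bar>+1)"
  have tp: "t > 0" using Np by (simp add: t_def)
  have "2*t*N + t^2*d \<le> 0" by (rule h)
  then have "t*(2*N + t*d) \<le> 0" by (simp add: algebra_simps power2_eq_square)
  then have "2*N + t*d \<le> 0" using tp by (simp add: mult_le_0_iff)
  moreover have "t*\<bar>d\<bar> \<le> N"
  proof -
    have "t*\<bar>d\<bar> = N*\<bar>d\<bar>/(\<bar>d\<bar>+1)" by (simp add: t_def)
    also have "\<dots> \<le> N" using Np by (simp add: divide_le_eq)
    finally show ?thesis .
  qed
  moreover have "- (t*\<bar>d\<bar>) \<le> t*d"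
  proof -
    have "- \<bar>d\<bar> \<le> d" by simp
    then have "t * (- \<bar>d\<bar>) \<le> t * d" using tp by (intro mult_left_mono) auto
    then show ?thesis by simp
  qed
  ultimately show False using Np by linarith
qed

lemma eigvec_exists:
  fixes A :: "real^'n^'n"
  assumes symA: "transpose A = A" and S: "subspace S" and nz: "S \<noteq> {0}"
    and inv: "\<And>v. v \<in> S \<Longrightarrow> A *v v \<in> S"
  shows "\<exists>u\<in>S. norm u = 1 \<and> A *v u = (u \<bullet> (A *v u)) *\<^sub>R u"
proof -
  let ?T = "sphere 0 1 \<inter> S"
  have cT: "compact ?T" using S by (intro compact_Int_closed compact_sphere closed_subspace)
  obtain v where v: "v \<in> S" "v \<noteq> 0" using nz S subspace_0 by blast
  have "v /\<^sub>R norm v \<in> ?T" using v S by (simp add: subspace_scale)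
  then have neT: "?T \<noteq> {}" by blast
  have "continuous_on ?T (\<lambda>v. v \<bullet> (A *v v))" by (intro continuous_intros)
  from continuous_attains_sup[OF cT neT this] obtain u where
    uT: "u \<in> ?T" and umax: "\<And>z. z \<in> ?T \<Longrightarrow> z \<bullet> (A *v z) \<le> u \<bullet> (A *v u)" by blast
  define f where "f = u \<bullet> (A *v u)"
  have uS: "u \<in> S" and un: "norm u = 1" using uT by auto
  have uu: "u \<bullet> u = 1" using un by (simp add: norm_eq_1)
  define w where "w = A *v u - f *\<^sub>R u"
  have wS: "w \<in> S" unfolding w_def using uS inv S by (simp add: subspace_diff subspace_scale)
  have uw: "u \<bullet> w = 0" unfolding w_def f_def using uu by (simp add: inner_diff_right)
  have wAu: "w \<bullet> (A *v u) = w \<bullet> w"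
  proof -
    have "A *v u = w + f *\<^sub>R u" by (simp add: w_def)
    then show ?thesis using uw by (simp add: inner_add_right inner_commute)
  qed
  have gen: "z \<bullet> (A *v z) \<le> f * (z \<bullet> z)" if zS: "z \<in> S" for z
  proof (cases "z = 0")
    case True then show ?thesis by simp
  next
    case False
    have nz: "norm z > 0" using False by simp
    have "z /\<^sub>R norm z \<in> ?T" using zS S False by (simp add: subspace_scale)
    then have "(z /\<^sub>R norm z) \<bullet> (A *v (z /\<^sub>R norm z)) \<le> f" using umax f_def by blast
    then have "(z \<bullet> (A *v z)) / (norm z)^2 \<le> f"
      by (simp add: matrix_vector_mult_scaleR power2_eq_square divide_simps)
    then have "z \<bullet> (A *v z) \<le> f * (norm z)^2" using nz by (simp add: divide_le_eq)
    then show ?thesis by (simp add: power2_norm_eq_inner)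
  qed
  have key: "2*t*(w \<bullet> w) + t^2*(w \<bullet> (A *v w) - f*(w \<bullet> w)) \<le> 0" for t
  proof -
    have zS: "u + t *\<^sub>R w \<in> S" using uS wS S by (simp add: subspace_add subspace_scale)
    have e1: "(u + t *\<^sub>R w) \<bullet> (A *v (u + t *\<^sub>R w)) = f + 2*t*(w \<bullet> w) + t^2*(w \<bullet> (A *v w))"
    proof -
      have "u \<bullet> (A *v w) = w \<bullet> (A *v u)" using sym_inner[OF symA, of u w] by (simp add: inner_commute)
      then show ?thesis using wAu
        by (simp add: matrix_vector_right_distrib matrix_vector_mult_scaleR inner_add_left inner_add_right
            f_def power2_eq_square algebra_simps)
    qed
    have e2: "(u + t *\<^sub>R w) \<bullet> (u + t *\<^sub>R w) = 1 + t^2*(w \<bullet> w)"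
      using uu uw by (simp add: inner_add_left inner_add_right inner_commute power2_eq_square)
    show ?thesis using gen[OF zS] unfolding e1 e2 by (simp add: algebra_simps)
  qed
  have "w \<bullet> w = 0" by (rule quad_nonpos_imp[OF _ key]) simp
  then have "w = 0" by simp
  then show ?thesis using uS un unfolding w_def f_def by auto
qed

lemma inner_sum_orthonormal:
  fixes E :: "'a::real_inner set"
  assumes fin: "finite E" and po: "pairwise orthogonal E" and n1: "\<And>e. e \<in> E \<Longrightarrow> norm e = 1"
    and f: "f \<in> E"
  shows "f \<bullet> (\<Sum>e\<in>E. c e *\<^sub>R e) = c f"
proof -
  have ff: "f \<bullet> f = 1" using n1[OF f] by (simp add: norm_eq_1)
  have z: "(\<Sum>e\<in>E - {f}. c e * (f \<bullet> e)) = 0"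
  proof (rule sum.neutral, rule ballI)
    fix e assume e: "e \<in> E - {f}"
    then have "f \<bullet> e = 0" using po f unfolding pairwise_def orthogonal_def by auto
    then show "c e * (f \<bullet> e) = 0" by simp
  qed
  have "f \<bullet> (\<Sum>e\<in>E. c e *\<^sub>R e) = (\<Sum>e\<in>E. c e * (f \<bullet> e))"
    by (simp add: inner_sum_right)
  also have "\<dots> = c f * (f \<bullet> f) + (\<Sum>e\<in>E - {f}. c e * (f \<bullet> e))"
    by (rule sum.remove[OF fin f])
  finally show ?thesis using ff z by simp
qed

lemma spectral:
  fixes A :: "real^'n^'n"
  assumes symA: "transpose A = A"
  obtains E mu where "finite E" "pairwise orthogonal E" "\<And>e. e \<in> E \<Longrightarrow> norm e = 1"
    "\<And>e. e \<in> E \<Longrightarrow> A *v e = mu e *\<^sub>R e" "\<And>v. v = (\<Sum>e\<in>E. (e \<bullet> v) *\<^sub>R e)"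
proof -
  define OE where "OE E \<longleftrightarrow> pairwise orthogonal E \<and> (\<forall>e\<in>E. norm e = 1 \<and> (\<exists>\<mu>. A *v e = \<mu> *\<^sub>R e))"
    for E :: "(real^'n) set"
  have bnd: "finite E \<and> card E < Suc DIM(real^'n)" if "OE E" for E
  proof -
    have "0 \<notin> E" using that unfolding OE_def by force
    then have "independent E" using that unfolding OE_def by (intro pairwise_orthogonal_independent) auto
    then show ?thesis using independent_bound by (metis less_Suc_eq_le)
  qed
  have oe0: "OE {}" by (simp add: OE_def)
  have "\<exists>E. OE E \<and> (\<forall>F. OE F \<longrightarrow> card F \<le> card E)"
    by (rule ex_has_greatest_nat[of OE "{}" card "Suc DIM(real^'n)", OF oe0]) (use bnd in blast)
  then obtain E where OEE: "OE E" and emax: "\<And>F. OE F \<Longrightarrow> card F \<le> card E" by blast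
  have fin: "finite E" using bnd OEE by blast
  have po: "pairwise orthogonal E" and n1: "\<And>e. e \<in> E \<Longrightarrow> norm e = 1"
    and ev: "\<And>e. e \<in> E \<Longrightarrow> \<exists>\<mu>. A *v e = \<mu> *\<^sub>R e" using OEE unfolding OE_def by auto
  define mu where "mu e = (SOME \<mu>. A *v e = \<mu> *\<^sub>R e)" for e
  have mu: "A *v e = mu e *\<^sub>R e" if "e \<in> E" for e
    unfolding mu_def using someI_ex[OF ev[OF that]] .
  have zero: "v = 0" if vp: "\<forall>e\<in>E. e \<bullet> v = 0" for v
  proof (rule ccontr)
    assume vnz: "v \<noteq> 0"
    define S where "S = {v. \<forall>e\<in>E. e \<bullet> v = 0}"
    have sub: "subspace S" unfolding S_def subspace_def by (simp add: inner_add_right)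
    have "S \<noteq> {0}" using vp vnz unfolding S_def by blast
    moreover have "A *v z \<in> S" if "z \<in> S" for z
    proof -
      have "e \<bullet> (A *v z) = 0" if e: "e \<in> E" for e
        using sym_inner[OF symA, of e z] mu[OF e] \<open>z \<in> S\<close> e unfolding S_def by simp
      then show ?thesis unfolding S_def by blast
    qed
    ultimately obtain u where uS: "u \<in> S" and un: "norm u = 1" and ue: "A *v u = (u \<bullet> (A *v u)) *\<^sub>R u"
      using eigvec_exists[OF symA sub] by blast
    have uE: "u \<notin> E"
    proof
      assume "u \<in> E" then have "u \<bullet> u = 0" using uS unfolding S_def by blast
      then show False using un by simp
    qed
    have "OE (insert u E)"
      unfolding OE_def
    proof (rule conjI)
      show "pairwise orthogonal (insert u E)"
        using po uS unfolding pairwise_insert S_def orthogonal_def by (auto simp: inner_commute)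
    next
      show "\<forall>e\<in>insert u E. norm e = 1 \<and> (\<exists>\<mu>. A *v e = \<mu> *\<^sub>R e)" 
      proof
        fix e assume "e \<in> insert u E"
        then consider "e = u" | "e \<in> E" by blast
        then show "norm e = 1 \<and> (\<exists>\<mu>. A *v e = \<mu> *\<^sub>R e)"
        proof cases
          case 1 then show ?thesis using un ue by blast
        next
          case 2 then show ?thesis using n1 ev by blast
        qed
      qed
    qed
    then have "card (insert u E) \<le> card E" by (rule emax)
    then show False using uE fin by simp
  qed
  have expand: "v = (\<Sum>e\<in>E. (e \<bullet> v) *\<^sub>R e)" for v
  proof -
    have "\<forall>e\<in>E. e \<bullet> (v - (\<Sum>e\<in>E. (e \<bullet> v) *\<^sub>R e)) = 0"
      using inner_sum_orthonormal[OF fin po n1] by (simp add: inner_diff_right)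
    then have "v - (\<Sum>e\<in>E. (e \<bullet> v) *\<^sub>R e) = 0" by (rule zero)
    then show ?thesis by simp
  qed
  show ?thesis using that[OF fin po n1 mu expand] by blast
qed


fun cheb :: "nat \<Rightarrow> real \<Rightarrow> real" where
  "cheb 0 x = 1"
| "cheb (Suc 0) x = x"
| "cheb (Suc (Suc n)) x = 2*x*cheb (Suc n) x - cheb n x"

lemma cos_rec: "cos ((a::real) + b) = 2*cos a*cos b - cos (a - b)"
  by (simp add: cos_add cos_diff)

lemma cheb_cos0: "x = cos th \<Longrightarrow> cheb n x = cos (real n * th)"
proof (induction n x rule: cheb.induct)
  case (3 n x)
  have e1: "real (Suc (Suc n)) * th = real (Suc n) * th + th" by (simp add: algebra_simps)
  have e2: "real n * th = real (Suc n) * th - th" by (simp add: algebra_simps)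
  show ?case using 3 unfolding cheb.simps e1
    by (simp only: cos_rec[of "real (Suc n) * th" th] e2[symmetric]) (simp add: algebra_simps)
qed simp_all

lemma cheb_cos: "cheb n (cos th) = cos (real n * th)"
  by (rule cheb_cos0) simp

lemma cheb_abs: "\<bar>x\<bar> \<le> 1 \<Longrightarrow> \<bar>cheb n x\<bar> \<le> 1"
proof -
  assume "\<bar>x\<bar> \<le> 1"
  then have "x = cos (arccos x)" by (simp add: cos_arccos abs_le_iff)
  then have "cheb n x = cos (real n * arccos x)" using cheb_cos by metis
  then show ?thesis by simp
qed

lemma cheb_zw:
  assumes zw: "z * w = 1"
  shows "x = (z + w)/2 \<Longrightarrow> cheb n x = (z^n + w^n)/2"
proof (induction n x rule: cheb.induct)
  case (3 n x)
  have "(z + w) * (z^Suc n + w^Suc n) = z^Suc (Suc n) + w^Suc (Suc n) + (z*w)*(z^n + w^n)"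
    by (simp add: algebra_simps power_Suc)
  then have "(z + w) * (z^Suc n + w^Suc n) = z^Suc (Suc n) + w^Suc (Suc n) + (z^n + w^n)"
    using zw by simp
  moreover have h1: "cheb (Suc n) x = (z^Suc n + w^Suc n)/2" using 3 by blast
  moreover have h0: "cheb n x = (z^n + w^n)/2" using 3 by blast
  ultimately have L: "(z + w) * (2 * cheb (Suc n) x) - 2 * cheb n x = z^Suc (Suc n) + w^Suc (Suc n)"
  proof -
    assume I: "(z + w) * (z^Suc n + w^Suc n) = z^Suc (Suc n) + w^Suc (Suc n) + (z^n + w^n)"
    have h1': "2 * cheb (Suc n) x = z^Suc n + w^Suc n" using h1 by simp
    have h0': "2 * cheb n x = z^n + w^n" using h0 by simp
    show ?thesis unfolding h1' h0' I by simp
  qed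
  have xe: "2*x = z + w" using 3(3) by simp
  have "cheb (Suc (Suc n)) x = ((2*x) * (2 * cheb (Suc n) x) - 2 * cheb n x)/2" by simp
  then show ?case unfolding xe L .
qed simp_all

lemma degree_lin_le: "degree [:a, b:] \<le> 1"
  by (metis One_nat_def degree_pCons_le le_SucI degree_pCons_0 order_trans)

lemma cheb_poly0: "\<exists>p. degree p \<le> n \<and> (\<forall>v. cheb n (al + be * v) = poly p v)"
proof (induction n rule: nat_less_induct)
  case (1 n)
  show ?case
  proof (cases n)
  case 0 show ?thesis unfolding 0 by (rule exI[of _ "[:1:]"]) simp
next
  case (Suc m) note m = this
  show ?thesis
  proof (cases m)
  case 0 show ?thesis unfolding m 0 by (rule exI[of _ "[:al, be:]"]) (simp add: degree_lin_le)
next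
  case (Suc n) note mm = this
  have "\<exists>p. degree p \<le> Suc n \<and> (\<forall>v. cheb (Suc n) (al + be * v) = poly p v)"
    using 1 m mm by simp
  then obtain p1 where p1: "degree p1 \<le> Suc n" "\<And>v. cheb (Suc n) (al + be * v) = poly p1 v"
    by blast
  have "\<exists>p. degree p \<le> n \<and> (\<forall>v. cheb n (al + be * v) = poly p v)"
    using 1 m mm by simp
  then obtain p0 where p0: "degree p0 \<le> n" "\<And>v. cheb n (al + be * v) = poly p0 v"
    by blast
  define p where "p = smult 2 ([:al, be:] * p1) - p0"
  have "degree (smult 2 ([:al, be:] * p1)) \<le> Suc (Suc n)"
  proof -
    have "degree (smult 2 ([:al, be:] * p1)) \<le> degree ([:al, be:] * p1)" by (rule degree_smult_le)
    also have "\<dots> \<le> degree [:al, be:] + degree p1" by (rule degree_mult_le)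
    also have "\<dots> \<le> Suc (Suc n)" using degree_lin_le[of al be] p1(1) by linarith
    finally show ?thesis .
  qed
  moreover have "degree p0 \<le> Suc (Suc n)" using p0(1) by simp
  ultimately have "degree p \<le> Suc (Suc n)" unfolding p_def by (rule degree_diff_le)
  moreover have "cheb (Suc (Suc n)) (al + be * v) = poly p v" for v
    using p0(2)[of v] p1(2)[of v] by (simp add: p_def algebra_simps)
  ultimately show ?thesis unfolding m mm by blast
qed
qed
qed

lemmas cheb_poly = cheb_poly0

lemma cheb_approx:
  fixes a b :: real and k :: nat
  assumes a: "0 < a" and ab: "a \<le> b" and k: "k \<ge> 1"
  shows "\<exists>R. degree R \<le> k \<and> poly R 0 = 1 \<and>
     (\<forall>v. a \<le> v \<and> v \<le> b \<longrightarrow> \<bar>poly R v\<bar> \<le> 2 * ((sqrt (b/a) - 1)/(sqrt (b/a) + 1))^k)"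
proof (cases "a = b")
  case True
  define R where "R = [:1, -1/a:]^k"
  have "degree R \<le> degree [:1, -1/a:] * k" unfolding R_def by (rule degree_power_le)
  also have "\<dots> \<le> 1 * k" using degree_lin_le[of 1 "-1/a"] by (intro mult_right_mono) auto
  finally have dR: "degree R \<le> k" by simp
  have "poly R 0 = 1" by (simp add: R_def)
  moreover have "\<bar>poly R v\<bar> \<le> 2 * ((sqrt (b/a) - 1)/(sqrt (b/a) + 1))^k" if "a \<le> v \<and> v \<le> b" for v
  proof -
    have "v = a" using that True by simp
    then have "poly R v = 0" using a k by (simp add: R_def)
    moreover have "sqrt (b/a) = 1" using True a by simp
    ultimately show ?thesis by simp
  qed
  ultimately show ?thesis using dR by blast
next
  case False
  then have ab': "a < b" using ab by simp
  define t where "t = sqrt (b/a)"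
  have t2: "t^2 = b/a" using a ab by (simp add: t_def)
  have t1: "t > 1" using a ab' by (simp add: t_def)
  define z where "z = (t+1)/(t-1)"
  define w where "w = (t-1)/(t+1)"
  have zw: "z * w = 1" using t1 by (simp add: z_def w_def)
  have wpos: "w > 0" using t1 by (simp add: w_def)
  have zpos: "z > 0" using t1 by (simp add: z_def)
  define al where "al = (b+a)/(b-a)"
  define be where "be = -2/(b-a)"
  have alzw: "al = (z + w)/2"
  proof -
    have d1: "t - 1 \<noteq> 0" "t + 1 \<noteq> 0" "t*t - 1 \<noteq> 0" "t*(t*2) - 2 \<noteq> 0" using t1
      by (auto simp: algebra_simps) (smt (verit) mult_less_cancel_left1)+
    have "(z + w)/2 = (t^2 + 1)/(t^2 - 1)" using t1 d1
      by (simp add: z_def w_def field_simps power2_eq_square)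
    also have "\<dots> = (b/a + 1)/(b/a - 1)" using t2 by simp
    also have "\<dots> = al" using a ab' by (simp add: al_def field_simps)
    finally show ?thesis by simp
  qed
  define C where "C = cheb k al"
  have C: "C = (z^k + w^k)/2" unfolding C_def alzw by (rule cheb_zw[OF zw]) simp
  have Cpos: "C > 0"
  proof -
    have "z^k > 0" "w^k > 0" using zpos wpos by simp_all
    then show ?thesis unfolding C by simp
  qed
  obtain p where dp: "degree p \<le> k" and pp: "\<And>v. cheb k (al + be * v) = poly p v"
    using cheb_poly by blast
  define R where "R = smult (1/C) p"
  have dR: "degree R \<le> k" using dp degree_smult_le[of "1/C" p] by (simp add: R_def)
  have R0: "poly R 0 = 1" using pp[of 0] Cpos by (simp add: R_def C_def)
  have "\<bar>poly R v\<bar> \<le> 2 * w^k" if v: "a \<le> v \<and> v \<le> b" for v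
  proof -
    have "b - a \<noteq> 0" using ab' by simp
    have "al + be * v = (b+a)/(b-a) + (-2 * v)/(b-a)" by (simp add: al_def be_def)
    also have "\<dots> = ((b+a) + (-2 * v))/(b-a)" by (rule add_divide_distrib[symmetric])
    also have "\<dots> = (b+a-2 * v)/(b-a)" by simp
    finally have "al + be * v = (b+a-2 * v)/(b-a)" .
    moreover have "\<bar>(b+a-2 * v)/(b-a)\<bar> \<le> 1" using ab' v by (simp add: abs_le_iff divide_le_eq le_divide_eq)
    ultimately have "\<bar>poly p v\<bar> \<le> 1" using cheb_abs pp by metis
    then have "\<bar>poly R v\<bar> \<le> 1/C" using Cpos by (simp add: R_def abs_mult divide_le_eq)
    also have "1/C \<le> 2 * w^k"
    proof -
      have "z^k * w^k = 1" using zw by (metis power_mult_distrib power_one)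
      then have zk: "w^k * z^k = 1" by (simp add: mult.commute)
      have "2*w^k * C = (2*C)*w^k" by (simp add: algebra_simps)
      also have "\<dots> = (z^k + w^k)*w^k" using C by simp
      also have "\<dots> = w^k*w^k + w^k*z^k" by (simp add: algebra_simps)
      finally have "2*w^k * C = w^k*w^k + 1" using zk by simp
      moreover have "w^k*w^k \<ge> 0" by simp
      ultimately have "1 \<le> 2*w^k * C" by linarith
      then show ?thesis using Cpos by (simp add: divide_le_eq)
    qed
    finally show ?thesis .
  qed
  then show ?thesis using dR R0 unfolding w_def t_def by blast
qed

theorem theorem4p4:
  fixes A :: "real^'n^'n" and g x_opt x_k :: "real^'n"
    and \<Delta> lam_opt :: real and k :: nat
  assumes symA: "transpose A = A"
    and g_nz: "g \<noteq> 0"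
    and Delta_pos: "\<Delta> > 0"
    and opt_feas: "norm x_opt \<le> \<Delta>"
    and opt_min: "\<forall>y. norm y \<le> \<Delta> \<longrightarrow> trs_obj A g x_opt \<le> trs_obj A g y"
    and lam_nonneg: "lam_opt \<ge> 0"
    and kkt_eq: "(A + lam_opt *\<^sub>R mat 1) *v x_opt = - g"
    and kkt_compl: "lam_opt * (\<Delta> - norm x_opt) = 0"
    and kkt_psd: "\<forall>v. v \<bullet> ((A + lam_opt *\<^sub>R mat 1) *v v) \<ge> 0"
    and easy_case: "lam_opt > - eig_min A"
    and xk_gltr: "gltr_iterate A g \<Delta> k x_k"
    and norm_opt: "norm x_opt = \<Delta>"
    and norm_xk: "norm x_k = \<Delta>"
  defines "\<kappa> \<equiv> (eig_max A + lam_opt) / (eig_min A + lam_opt)"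
  defines "s \<equiv> sin_angle_subspace x_opt (krylov A g k)"
  defines "\<rho> \<equiv> (sqrt \<kappa> - 1) / (sqrt \<kappa> + 1)"
  shows "(INF c::real. norm (x_opt /\<^sub>R \<Delta> - c *\<^sub>R x_k))
           \<le> sqrt \<kappa> * sqrt (s^2 + s^4)
       \<and> sqrt \<kappa> * sqrt (s^2 + s^4)
           \<le> 2 * sqrt \<kappa> * \<rho>^k + 4 * sqrt \<kappa> * \<rho>^(2*k)"
proof -
  define Mf where "Mf v = A *v v + lam_opt *\<^sub>R v" for v
  have Mf: "(A + lam_opt *\<^sub>R mat 1) *v v = Mf v" for v
    by (simp add: Mf_def matrix_vector_mult_add_rdistrib scaleR_matrix_vector_assoc[symmetric])
  have "Mf x_opt = - g" using kkt_eq Mf by simp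
  then have gM: "g = - Mf x_opt" by simp
  obtain E mu where fin: "finite E" and po: "pairwise orthogonal E" and n1: "\<And>e. e \<in> E \<Longrightarrow> norm e = 1"
    and eig: "\<And>e. e \<in> E \<Longrightarrow> A *v e = mu e *\<^sub>R e" and expand: "\<And>v. v = (\<Sum>e\<in>E. (e \<bullet> v) *\<^sub>R e)"
    by (rule spectral[OF symA]) blast
  have parseval: "v \<bullet> w = (\<Sum>e\<in>E. (e \<bullet> v) * (e \<bullet> w))" for v w
  proof -
    have "v \<bullet> w = (\<Sum>e\<in>E. (e \<bullet> v) *\<^sub>R e) \<bullet> w"
      using expand[of v] by (rule arg_cong[where f="\<lambda>x. x \<bullet> w"])
    also have "\<dots> = (\<Sum>e\<in>E. (e \<bullet> v) * (e \<bullet> w))" by (simp add: inner_sum_left)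
    finally show ?thesis .
  qed
  have eA: "e \<bullet> (A *v v) = mu e * (e \<bullet> v)" if e: "e \<in> E" for e v
    using sym_inner[OF symA, of e v] eig[OF e] by simp
  define nu where "nu e = mu e + lam_opt" for e
  have eM: "e \<bullet> Mf v = nu e * (e \<bullet> v)" if e: "e \<in> E" for e v
    using eA[OF e] by (simp add: Mf_def nu_def inner_add_right algebra_simps)
  have Enz: "E \<noteq> {}"
  proof
    assume "E = {}" then have "g = 0" using expand[of g] by simp
    then show False using g_nz by simp
  qed
  have eigset: "real_eigenvalues A = mu ` E"
  proof
    show "real_eigenvalues A \<subseteq> mu ` E"
    proof
      fix th assume "th \<in> real_eigenvalues A"
      then obtain v where v: "v \<noteq> 0" "A *v v = th *\<^sub>R v" unfolding real_eigenvalues_def by blast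
      have "\<exists>e\<in>E. e \<bullet> v \<noteq> 0"
      proof (rule ccontr)
        assume "\<not> ?thesis"
        then have "v = 0" using expand[of v] by simp
        then show False using v by simp
      qed
      then obtain e where e: "e \<in> E" "e \<bullet> v \<noteq> 0" by blast
      have "th * (e \<bullet> v) = mu e * (e \<bullet> v)" using eA[OF e(1), of v] v(2) by simp
      then have "th = mu e" using e(2) by simp
      then show "th \<in> mu ` E" using e(1) by blast
    qed
  next
    show "mu ` E \<subseteq> real_eigenvalues A"
    proof
      fix th assume "th \<in> mu ` E"
      then obtain e where e: "e \<in> E" "th = mu e" by blast
      have "e \<noteq> 0" using n1[OF e(1)] by auto
      then show "th \<in> real_eigenvalues A" unfolding real_eigenvalues_def using eig[OF e(1)] e(2) by blast
    qed
  qed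
  define a where "a = eig_min A + lam_opt"
  define b where "b = eig_max A + lam_opt"
  have nu_ab: "a \<le> nu e \<and> nu e \<le> b" if e: "e \<in> E" for e
  proof -
    have "eig_min A \<le> mu e" unfolding eig_min_def eigset using fin e by simp
    moreover have "mu e \<le> eig_max A" unfolding eig_max_def eigset using fin e by simp
    ultimately show ?thesis by (simp add: a_def b_def nu_def)
  qed
  have apos: "a > 0" using easy_case by (simp add: a_def)
  have ab: "a \<le> b" using nu_ab Enz by fastforce
  have kap: "\<kappa> = b / a" by (simp add: \<kappa>_def a_def b_def)
  have kap1: "\<kappa> \<ge> 1" using kap apos ab by simp
  have quad: "a * (v \<bullet> v) \<le> v \<bullet> Mf v \<and> v \<bullet> Mf v \<le> b * (v \<bullet> v)" for v
  proof -
    have q: "v \<bullet> Mf v = (\<Sum>e\<in>E. nu e * (e \<bullet> v)^2)"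
      unfolding parseval[of v "Mf v"] by (rule sum.cong) (auto simp: eM power2_eq_square)
    have vv: "v \<bullet> v = (\<Sum>e\<in>E. (e \<bullet> v)^2)"
      unfolding parseval[of v v] by (simp add: power2_eq_square)
    have "a * (v \<bullet> v) = (\<Sum>e\<in>E. a * (e \<bullet> v)^2)" unfolding vv by (simp add: sum_distrib_left)
    also have "\<dots> \<le> (\<Sum>e\<in>E. nu e * (e \<bullet> v)^2)"
      by (rule sum_mono) (use nu_ab in \<open>auto intro: mult_right_mono\<close>)
    finally have 1: "a * (v \<bullet> v) \<le> v \<bullet> Mf v" unfolding q .
    have "(\<Sum>e\<in>E. nu e * (e \<bullet> v)^2) \<le> (\<Sum>e\<in>E. b * (e \<bullet> v)^2)"
      by (rule sum_mono) (use nu_ab in \<open>auto intro: mult_right_mono\<close>)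
    also have "\<dots> = b * (v \<bullet> v)" unfolding vv by (simp add: sum_distrib_left)
    finally have 2: "v \<bullet> Mf v \<le> b * (v \<bullet> v)" unfolding q .
    show ?thesis using 1 2 by simp
  qed
  define K where "K = krylov A g k"
  have subK: "subspace K" unfolding K_def krylov_def by (rule subspace_span)
  have k1: "k \<ge> 1"
  proof (rule ccontr)
    assume "\<not> k \<ge> 1" then have "k = 0" by simp
    then have "K = {0}" unfolding K_def krylov_def by simp
    moreover have "x_k \<in> K" using xk_gltr unfolding gltr_iterate_def K_def by blast
    ultimately have "x_k = 0" by simp
    then show False using norm_xk Delta_pos by simp
  qed
  define B where "B = (SOME B. B \<subseteq> K \<and> pairwise orthogonal B \<and> (\<forall>b\<in>B. norm b = 1) \<and> span B = K)"
  have "\<exists>B. B \<subseteq> K \<and> pairwise orthogonal B \<and> (\<forall>b\<in>B. norm b = 1) \<and> span B = K"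
    using orthonormal_basis_subspace[OF subK] by metis
  then have Bp: "B \<subseteq> K \<and> pairwise orthogonal B \<and> (\<forall>b\<in>B. norm b = 1) \<and> span B = K"
    unfolding B_def by (rule someI_ex)
  then have poB: "pairwise orthogonal B" and n1B: "\<And>b. b \<in> B \<Longrightarrow> norm b = 1" and spB: "span B = K"
    by auto
  have finB: "finite B"
  proof -
    have "0 \<notin> B" using n1B by force
    then have "independent B" using poB by (intro pairwise_orthogonal_independent)
    then show ?thesis using independent_bound by blast
  qed
  define P where "P = (\<Sum>b\<in>B. (b \<bullet> x_opt) *\<^sub>R b)"
  define r where "r = x_opt - P"
  have s_eq: "s = norm r / norm x_opt"
    unfolding s_def sin_angle_subspace_def Let_def B_def[symmetric] K_def[symmetric] r_def P_def ..
  have PK: "P \<in> K" unfolding P_def spB[symmetric]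
    by (intro span_sum span_scale span_base)
  have rB: "orthogonal r b" if b: "b \<in> B" for b
  proof -
    have "b \<bullet> P = b \<bullet> x_opt" unfolding P_def by (rule inner_sum_orthonormal[OF finB poB n1B b])
    then show ?thesis unfolding orthogonal_def r_def inner_diff_left
      by (simp add: inner_commute[of P b] inner_commute[of x_opt b])
  qed
  have rK: "r \<bullet> y = 0" if y: "y \<in> K" for y
  proof -
    have "orthogonal r y" by (rule orthogonal_to_span[of y B r]) (use y spB rB in auto)
    then show ?thesis by (simp add: orthogonal_def)
  qed
  have pyth: "(norm (x_opt - y))^2 = (norm r)^2 + (norm (P - y))^2" if y: "y \<in> K" for y
  proof -
    have "P - y \<in> K" using PK y subK by (simp add: subspace_diff)
    then have "orthogonal r (P - y)" using rK by (simp add: orthogonal_def)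
    moreover have "x_opt - y = r + (P - y)" by (simp add: r_def)
    ultimately show ?thesis using norm_add_Pythagorean by metis
  qed
  have closest: "norm r \<le> norm (x_opt - y)" if y: "y \<in> K" for y
  proof -
    have "(norm r)^2 \<le> (norm (x_opt - y))^2" using pyth[OF y] by simp
    then show ?thesis by (simp add: power2_le_iff_abs_le)
  qed
  have zK: "0 \<in> K" using subK by (rule subspace_0)
  have PD: "(norm P)^2 + (norm r)^2 = \<Delta>^2" using pyth[OF zK] norm_opt by simp
  have rs: "norm r = s * \<Delta>" using s_eq norm_opt Delta_pos by simp
  have s0: "s \<ge> 0" using s_eq by simp
  have iterM: "(Mf ^^ j) g \<in> span {((\<lambda>v. A *v v) ^^ i) g | i. i \<le> j}" for j
  proof (induction j)
    case 0 show ?case by (rule span_base) auto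
  next
    case (Suc j)
    define S where "S j = {((\<lambda>v. A *v v) ^^ i) g | i. i \<le> j}" for j
    have sub: "span (S j) \<subseteq> span (S (Suc j))" by (rule span_mono) (auto simp: S_def)
    have img: "(\<lambda>v. A *v v) ` S j \<subseteq> S (Suc j)"
    proof
      fix x assume "x \<in> (\<lambda>v. A *v v) ` S j"
      then obtain i where "i \<le> j" "x = A *v (((\<lambda>v. A *v v) ^^ i) g)" unfolding S_def by blast
      then have "x = ((\<lambda>v. A *v v) ^^ Suc i) g" "Suc i \<le> Suc j" by simp_all
      then show "x \<in> S (Suc j)" unfolding S_def by blast
    qed
    define w where "w = (Mf ^^ j) g"
    have wS: "w \<in> span (S j)" using Suc unfolding w_def S_def .
    have "A *v w \<in> (\<lambda>v. A *v v) ` span (S j)" using wS by blast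
    also have "\<dots> = span ((\<lambda>v. A *v v) ` S j)" by (rule span_linear_image[symmetric]) (rule matrix_vector_mul_linear)
    also have "\<dots> \<subseteq> span (S (Suc j))" using img by (rule span_mono)
    finally have 1: "A *v w \<in> span (S (Suc j))" .
    have 2: "lam_opt *\<^sub>R w \<in> span (S (Suc j))" using wS sub by (intro span_scale) blast
    have "(Mf ^^ Suc j) g = A *v w + lam_opt *\<^sub>R w" by (simp add: w_def Mf_def)
    then have "(Mf ^^ Suc j) g \<in> span (S (Suc j))" using span_add[OF 1 2] by simp
    then show ?case by (simp add: S_def)
  qed
  have iterK: "(Mf ^^ j) g \<in> K" if j: "j < k" for j
  proof -
    have "span {((\<lambda>v. A *v v) ^^ i) g | i. i \<le> j} \<subseteq> K"
      unfolding K_def krylov_def by (rule span_mono) (use j in auto)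
    then show ?thesis using iterM by blast
  qed
  have coefM: "e \<bullet> (Mf ^^ j) g = nu e ^ j * (e \<bullet> g)" if e: "e \<in> E" for e j
    by (induction j) (simp_all add: eM[OF e])
  have eg: "e \<bullet> g = - nu e * (e \<bullet> x_opt)" if e: "e \<in> E" for e
    using eM[OF e, of x_opt] gM by simp
  have sqk: "sqrt (b / a) = sqrt \<kappa>" using kap by simp
  obtain R where dR: "degree R \<le> k" and R0: "poly R 0 = 1"
    and Rb: "\<And>v. a \<le> v \<and> v \<le> b \<Longrightarrow> \<bar>poly R v\<bar> \<le> 2 * \<rho>^k"
    using cheb_approx[OF apos ab k1] unfolding sqk \<rho>_def[symmetric] by blast
  obtain c Q where RQ: "R = pCons c Q" by (rule pCons_cases)
  have c1: "c = 1" using R0 RQ by simp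
  have dQ: "degree Q < k"
  proof (cases "Q = 0")
    case True then show ?thesis using k1 by simp
  next
    case False then have "degree R = Suc (degree Q)" using RQ by simp
    then show ?thesis using dR by simp
  qed
  define y where "y = (\<Sum>j\<le>degree Q. coeff Q j *\<^sub>R (Mf ^^ j) g)"
  have yK: "y \<in> K" unfolding y_def
    by (intro subspace_sum[OF subK] subspace_scale[OF subK] iterK) (use dQ in auto)
  have ey: "e \<bullet> (x_opt - y) = poly R (nu e) * (e \<bullet> x_opt)" if e: "e \<in> E" for e
  proof -
    have "e \<bullet> y = (\<Sum>j\<le>degree Q. coeff Q j * (nu e ^ j * (e \<bullet> g)))"
      unfolding y_def by (simp add: inner_sum_right coefM[OF e])
    also have "\<dots> = poly Q (nu e) * (e \<bullet> g)"
      by (simp add: poly_altdef sum_distrib_right mult.assoc)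
    finally have "e \<bullet> y = - nu e * poly Q (nu e) * (e \<bullet> x_opt)" using eg[OF e] by simp
    then show ?thesis using RQ c1 by (simp add: inner_diff_right algebra_simps)
  qed
  have rho0: "\<rho> \<ge> 0"
  proof -
    have "sqrt \<kappa> \<ge> 1" using kap1 by simp
    then show ?thesis unfolding \<rho>_def by simp
  qed
  have "(norm (x_opt - y))^2 = (\<Sum>e\<in>E. (poly R (nu e))^2 * (e \<bullet> x_opt)^2)"
    unfolding power2_norm_eq_inner parseval[of "x_opt - y" "x_opt - y"]
    by (rule sum.cong) (simp_all add: ey power2_eq_square)
  also have "\<dots> \<le> (\<Sum>e\<in>E. (2 * \<rho>^k)^2 * (e \<bullet> x_opt)^2)"
  proof (rule sum_mono)
    fix e assume e: "e \<in> E"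
    have "\<bar>poly R (nu e)\<bar> \<le> 2 * \<rho>^k" using Rb nu_ab[OF e] by blast
    then have "\<bar>poly R (nu e)\<bar>^2 \<le> (2 * \<rho>^k)^2" by (rule power_mono) simp
    then have "(poly R (nu e))^2 \<le> (2 * \<rho>^k)^2" by simp
    then show "(poly R (nu e))^2 * (e \<bullet> x_opt)^2 \<le> (2 * \<rho>^k)^2 * (e \<bullet> x_opt)^2"
      by (rule mult_right_mono) simp
  qed
  also have "\<dots> = (2 * \<rho>^k)^2 * (x_opt \<bullet> x_opt)"
    unfolding parseval[of x_opt x_opt] by (simp add: sum_distrib_left power2_eq_square)
  also have "\<dots> = (2 * \<rho>^k * \<Delta>)^2" using norm_opt by (simp add: power2_norm_eq_inner[symmetric] power_mult_distrib)
  finally have "(norm (x_opt - y))^2 \<le> (2 * \<rho>^k * \<Delta>)^2" .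
  then have "norm (x_opt - y) \<le> 2 * \<rho>^k * \<Delta>" using rho0 Delta_pos by (simp add: power2_le_iff_abs_le)
  then have "s * \<Delta> \<le> 2 * \<rho>^k * \<Delta>" using closest[OF yK] rs by simp
  then have s_bnd: "s \<le> 2 * \<rho>^k" using Delta_pos by simp
  define D where "D z = (z - x_opt) \<bullet> Mf (z - x_opt)" for z
  have ident: "trs_obj A g z - trs_obj A g x_opt = D z / 2 + lam_opt / 2 * (x_opt \<bullet> x_opt - z \<bullet> z)" for z
  proof -
    have symx: "x_opt \<bullet> (A *v z) = z \<bullet> (A *v x_opt)"
      using sym_inner[OF symA, of x_opt z] by (simp add: inner_commute)
    have "D z = z \<bullet> (A *v z) + lam_opt * (z \<bullet> z) - 2 * (z \<bullet> (A *v x_opt)) - 2 * lam_opt * (z \<bullet> x_opt)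
             + x_opt \<bullet> (A *v x_opt) + lam_opt * (x_opt \<bullet> x_opt)"
      unfolding D_def Mf_def
      by (simp add: matrix_vector_mult_diff_distrib inner_diff_left inner_diff_right symx
          inner_commute[of x_opt z] algebra_simps)
    moreover have "trs_obj A g z = 1/2 * (z \<bullet> (A *v z)) - z \<bullet> (A *v x_opt) - lam_opt * (z \<bullet> x_opt)"
      unfolding trs_obj_def gM Mf_def by (simp add: inner_add_right inner_diff_right)
    moreover have "trs_obj A g x_opt = 1/2 * (x_opt \<bullet> (A *v x_opt)) - x_opt \<bullet> (A *v x_opt) - lam_opt * (x_opt \<bullet> x_opt)"
      unfolding trs_obj_def gM Mf_def by (simp add: inner_add_right inner_diff_right)
    ultimately show ?thesis by (simp add: algebra_simps)
  qed
  have Dq: "a * (norm (z - x_opt))^2 \<le> D z \<and> D z \<le> b * (norm (z - x_opt))^2" for z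
    using quad[of "z - x_opt"] unfolding D_def power2_norm_eq_inner by simp
  have xkK: "x_k \<in> K" using xk_gltr unfolding gltr_iterate_def K_def by blast
  have Dmin: "D x_k \<le> D y" if y: "y \<in> K" "norm y = \<Delta>" for y
  proof -
    have "trs_obj A g x_k \<le> trs_obj A g y" using xk_gltr y unfolding gltr_iterate_def K_def by simp
    moreover have "x_k \<bullet> x_k = y \<bullet> y" using y norm_xk by (simp add: power2_norm_eq_inner[symmetric])
    ultimately show ?thesis using ident[of x_k] ident[of y] by simp
  qed
  have main: "(norm (x_k - x_opt))^2 \<le> \<kappa> * \<Delta>^2 * (s^2 + s^4)"
  proof (cases "P = 0")
    case True
    then have rx: "r = x_opt" by (simp add: r_def)
    then have s1: "s = 1" using rs norm_opt Delta_pos by simp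
    have "x_opt \<bullet> x_k = 0" using rK[OF xkK] rx by simp
    then have xo: "x_k \<bullet> x_opt = 0" by (simp add: inner_commute)
    have "(norm (x_k - x_opt))^2 = (norm x_k)^2 + (norm x_opt)^2 - 2 * (x_k \<bullet> x_opt)"
      by (simp add: power2_norm_eq_inner inner_diff_left inner_diff_right inner_commute)
    also have "\<dots> = 2 * \<Delta>^2" using xo norm_xk norm_opt by simp
    also have "\<dots> \<le> \<kappa> * \<Delta>^2 * (s^2 + s^4)"
    proof -
      have "1 * \<Delta>^2 \<le> \<kappa> * \<Delta>^2" using kap1 by (intro mult_right_mono) auto
      then show ?thesis using s1 by simp
    qed
    finally show ?thesis .
  next
    case False
    define p where "p = norm P"
    have pp: "p > 0" using False by (simp add: p_def)
    define y0 where "y0 = (\<Delta> / p) *\<^sub>R P"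
    have y0K: "y0 \<in> K" unfolding y0_def using PK subK by (simp add: subspace_scale)
    have ny0: "norm y0 = \<Delta>" unfolding y0_def using pp Delta_pos by (simp add: p_def)
    have "y0 - x_opt = ((\<Delta> / p - 1) *\<^sub>R P) + (- r)" by (simp add: y0_def r_def algebra_simps)
    moreover have "orthogonal ((\<Delta> / p - 1) *\<^sub>R P) (- r)"
      using rK[OF PK] by (simp add: orthogonal_def inner_commute)
    ultimately have "(norm (y0 - x_opt))^2 = (norm ((\<Delta> / p - 1) *\<^sub>R P))^2 + (norm r)^2"
      using norm_add_Pythagorean by (metis norm_minus_cancel)
    also have "(norm ((\<Delta> / p - 1) *\<^sub>R P))^2 = (\<Delta> - p)^2"
    proof -
      have "norm ((\<Delta> / p - 1) *\<^sub>R P) = \<bar>\<Delta> / p - 1\<bar> * p" by (simp add: p_def)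
      also have "\<dots> = \<bar>(\<Delta> / p - 1) * p\<bar>" using pp by (simp add: abs_mult)
      also have "(\<Delta> / p - 1) * p = \<Delta> - p" using pp by (simp add: algebra_simps)
      finally show ?thesis by simp
    qed
    finally have ny: "(norm (y0 - x_opt))^2 = (\<Delta> - p)^2 + (s * \<Delta>)^2" using rs by simp
    have pD: "p \<le> \<Delta>"
    proof -
      have "(norm r)^2 \<ge> 0" by simp
      then have "p^2 \<le> \<Delta>^2" using PD unfolding p_def by linarith
      then show ?thesis using Delta_pos pp by (simp add: power2_le_iff_abs_le)
    qed
    have "(\<Delta> - p) * \<Delta> \<le> (\<Delta> - p) * (\<Delta> + p)" using pD pp by (intro mult_left_mono) auto
    also have "\<dots> = \<Delta>^2 - p^2" by (simp add: power2_eq_square algebra_simps)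
    also have "\<dots> = (s * \<Delta>)^2" using PD rs by (simp add: p_def)
    finally have "(\<Delta> - p) * \<Delta> \<le> (s^2 * \<Delta>) * \<Delta>" by (simp add: power2_eq_square algebra_simps)
    then have "\<Delta> - p \<le> s^2 * \<Delta>" using Delta_pos by simp
    then have "(\<Delta> - p)^2 \<le> (s^2 * \<Delta>)^2" using pD by (intro power_mono) auto
    then have "(norm (y0 - x_opt))^2 \<le> \<Delta>^2 * (s^2 + s^4)" unfolding ny
      by (simp add: power_mult_distrib algebra_simps power2_eq_square)
        (simp add: power4_eq_xxxx)
    then have "b * (norm (y0 - x_opt))^2 \<le> b * (\<Delta>^2 * (s^2 + s^4))" using apos ab by (intro mult_left_mono) auto
    moreover have "a * (norm (x_k - x_opt))^2 \<le> b * (norm (y0 - x_opt))^2"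
      using Dq[of x_k] Dq[of y0] Dmin[OF y0K ny0] by linarith
    ultimately have "a * (norm (x_k - x_opt))^2 \<le> b * (\<Delta>^2 * (s^2 + s^4))" by linarith
    then have "(norm (x_k - x_opt))^2 \<le> b * (\<Delta>^2 * (s^2 + s^4)) / a" using apos by (simp add: le_divide_eq mult.commute)
    also have "b * (\<Delta>^2 * (s^2 + s^4)) / a = \<kappa> * \<Delta>^2 * (s^2 + s^4)" using kap by simp
    finally show ?thesis .
  qed
  have bdd: "bdd_below (range (\<lambda>c::real. norm (x_opt /\<^sub>R \<Delta> - c *\<^sub>R x_k)))"
    by (rule bdd_belowI[of _ 0]) auto
  have "(INF c::real. norm (x_opt /\<^sub>R \<Delta> - c *\<^sub>R x_k)) \<le> norm (x_opt /\<^sub>R \<Delta> - (1/\<Delta>) *\<^sub>R x_k)"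
    by (rule cINF_lower[OF bdd]) simp
  also have "x_opt /\<^sub>R \<Delta> - (1/\<Delta>) *\<^sub>R x_k = (1/\<Delta>) *\<^sub>R (x_opt - x_k)"
    by (simp add: scaleR_diff_right inverse_eq_divide)
  also have "norm ((1/\<Delta>) *\<^sub>R (x_opt - x_k)) = norm (x_k - x_opt) / \<Delta>"
    using Delta_pos by (simp add: norm_minus_commute)
  also have "\<dots> \<le> sqrt \<kappa> * sqrt (s^2 + s^4)"
  proof -
    have "norm (x_k - x_opt) \<le> sqrt (\<kappa> * \<Delta>^2 * (s^2 + s^4))" using main by (rule real_le_rsqrt)
    also have "\<dots> = sqrt \<kappa> * \<Delta> * sqrt (s^2 + s^4)" using Delta_pos by (simp add: real_sqrt_mult)
    finally show ?thesis using Delta_pos by (simp add: divide_le_eq algebra_simps)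
  qed
  finally have part1: "(INF c::real. norm (x_opt /\<^sub>R \<Delta> - c *\<^sub>R x_k)) \<le> sqrt \<kappa> * sqrt (s^2 + s^4)" .
  have "sqrt (s^2 + s^4) \<le> s + s^2"
  proof -
    have "s^2 + s^4 \<le> (s + s^2)^2" using s0 by (simp add: power2_eq_square power4_eq_xxxx algebra_simps)
    then have "sqrt (s^2 + s^4) \<le> sqrt ((s + s^2)^2)" by (rule real_sqrt_le_mono)
    then show ?thesis using s0 by simp
  qed
  also have "s + s^2 \<le> 2 * \<rho>^k + 4 * \<rho>^(2*k)"
  proof -
    have "s^2 \<le> (2 * \<rho>^k)^2" using s_bnd s0 by (intro power_mono) auto
    also have "(2 * \<rho>^k)^2 = 4 * \<rho>^(2*k)" by (simp add: power_mult_distrib power_mult[symmetric] mult.commute)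
    finally show ?thesis using s_bnd by linarith
  qed
  finally have "sqrt (s^2 + s^4) \<le> 2 * \<rho>^k + 4 * \<rho>^(2*k)" .
  then have "sqrt \<kappa> * sqrt (s^2 + s^4) \<le> sqrt \<kappa> * (2 * \<rho>^k + 4 * \<rho>^(2*k))"
    using kap1 by (intro mult_left_mono) auto
  then have part2: "sqrt \<kappa> * sqrt (s^2 + s^4) \<le> 2 * sqrt \<kappa> * \<rho>^k + 4 * sqrt \<kappa> * \<rho>^(2*k)"
    by (simp add: algebra_simps)
  show ?thesis using part1 part2 by blast
qed

end
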